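(* If $f\in\mathcal{G}=\mathcal{G}(1)$, then $\frac12\le \det T_{3,1}(f)\le 1$, and both bounds are sharp.
   Context: $\mathbb{D}=\{z\in\mathbb{C}:|z|<1\}$. $\mathcal{A}$ is the class of analytic functions $f$ on $\mathbb{D}$ with $f(0)=0$, $f'(0)=1$, written $f(z)=z+a_2z^2+a_3z^3+\cdots$. For $0<\delta\le1$, $\mathcal{G}(\delta)=\{f\in\mathcal{A}: \mathrm{Re}[1+zf''(z)/f'(z)]<1+\delta/2 \text{ for all } z\in\mathbb{D}\}$; here $\delta=1$. For $f\in\mathcal{A}$, $\det T_{3,1}(f)=2\,\mathrm{Re}(a_2^2\overline{a_3})-2|a_2|^2-|a_3|^2+1$ is the determinant of the Hermitian Toeplitz matrix $\begin{pmatrix}1&a_2&a_3\\ \overline{a_2}&1&a_2\\ \overline{a_3}&\overline{a_2}&1\end{pmatrix}$. *)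

theory Defs
  imports "HOL-Analysis.Analysis"
begin

definition tcoeff :: "(complex \<Rightarrow> complex) \<Rightarrow> nat \<Rightarrow> complex" where
  "tcoeff f n = (deriv ^^ n) f 0 / of_nat (fact n)"

definition classA :: "(complex \<Rightarrow> complex) \<Rightarrow> bool" where
  "classA f \<longleftrightarrow> f holomorphic_on ball 0 1 \<and> f 0 = 0 \<and> deriv f 0 = 1"

text \<open>Class G(delta): Re[1 + z f''(z)/f'(z)] < 1 + delta/2 on the disk
  (the quotient being defined requires f'(z) nonzero).\<close>
definition classG :: "real \<Rightarrow> (complex \<Rightarrow> complex) \<Rightarrow> bool" where
  "classG \<delta> f \<longleftrightarrow> classA f \<and>
     (\<forall>z\<in>ball 0 1. deriv f z \<noteq> 0 \<and>
        Re (1 + z * deriv (deriv f) z / deriv f z) < 1 + \<delta> / 2)"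

definition detT31 :: "(complex \<Rightarrow> complex) \<Rightarrow> real" where
  "detT31 f = 2 * Re ((tcoeff f 2)\<^sup>2 * cnj (tcoeff f 3)) - 2 * (cmod (tcoeff f 2))\<^sup>2
              - (cmod (tcoeff f 3))\<^sup>2 + 1"

end

theory Submission
  imports Defs "HOL-Complex_Analysis.Complex_Analysis"
begin

lemma normlt: fixes h :: complex assumes "Re h < 1/2" shows "cmod (h/(1-h)) < 1"
proof -
  have e1: "(cmod h)^2 = Re h^2 + Im h^2" by (simp add: cmod_power2)
  have e2: "(cmod (1-h))^2 = (1 - Re h)^2 + Im h^2" by (simp add: cmod_power2)
  have "(cmod h)^2 < (cmod (1-h))^2"
  proof -
    have "(1 - Re h)^2 = 1 - 2*Re h + Re h^2" by (simp add: power2_diff)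
    then show ?thesis using e1 e2 assms by linarith
  qed
  then have "cmod h < cmod (1-h)" by (rule power_less_imp_less_base) simp
  moreover have "1 - h \<noteq> 0" using assms by auto
  ultimately show ?thesis by (simp add: norm_divide divide_less_eq)
qed
lemma limr: fixes a b :: real assumes "\<And>r. 0<r \<Longrightarrow> r<1 \<Longrightarrow> r*a \<le> 1 - r^2*b" shows "a \<le> 1 - b"
proof -
  have "((\<lambda>r. r*a) \<longlongrightarrow> 1*a) (at_left (1::real))"
    by (intro tendsto_intros)
  moreover have "((\<lambda>r. 1 - r^2*b) \<longlongrightarrow> 1 - 1^2*b) (at_left (1::real))"
    by (intro tendsto_intros)
  moreover have ev: "eventually (\<lambda>r. r*a \<le> 1 - r^2*b) (at_left (1::real))"
    using eventually_at_left_real[of 0 1] assms by (auto elim!: eventually_mono)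
  ultimately have "1*a \<le> 1 - 1^2*b" by (intro tendsto_le[OF trivial_limit_at_left_real]) 
  then show ?thesis by simp
qed
lemma "(deriv ^^ 2) f = deriv (deriv f)" by (simp add: numeral_2_eq_2)
lemma "(deriv ^^ 3) f = deriv (deriv (deriv f))" by (simp add: numeral_3_eq_3)

lemma key:
  assumes G: "classG 1 f"
  defines "A \<equiv> deriv (deriv f) 0" and "B \<equiv> deriv (deriv (deriv f)) 0"
  shows "cmod A \<le> 1 \<and> cmod B \<le> 1 - (cmod A)^2"
proof -
  define f1 where "f1 = deriv f"
  define f2 where "f2 = deriv f1"
  have hol: "f holomorphic_on ball 0 1" and d1: "f1 0 = 1"
    and nz: "\<And>z. z \<in> ball 0 1 \<Longrightarrow> f1 z \<noteq> 0"
    and re: "\<And>z. z \<in> ball 0 1 \<Longrightarrow> Re (1 + z * f2 z / f1 z) < 1 + 1/2"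
    using G unfolding classG_def classA_def f1_def f2_def by auto
  have hf1: "f1 holomorphic_on ball 0 1" unfolding f1_def by (rule holomorphic_deriv[OF hol open_ball])
  have hf2: "f2 holomorphic_on ball 0 1" unfolding f2_def by (rule holomorphic_deriv[OF hf1 open_ball])
  have A: "A = f2 0" and B: "B = deriv f2 0" unfolding A_def B_def f2_def f1_def by auto
  have df1: "(f1 has_field_derivative A) (at 0)"
    unfolding A f2_def by (rule holomorphic_derivI[OF hf1 open_ball]) simp
  have df2: "(f2 has_field_derivative B) (at 0)"
    unfolding B by (rule holomorphic_derivI[OF hf2 open_ball]) simp
  define g where "g = (\<lambda>z. f2 z / f1 z)"
  have hg: "g holomorphic_on ball 0 1" unfolding g_def using hf1 hf2 nz by (intro holomorphic_intros) auto
  have reh: "Re (z * g z) < 1/2" if "z \<in> ball 0 1" for z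
    using re[OF that] by (simp add: g_def)
  have den: "1 - z * g z \<noteq> 0" if "z \<in> ball 0 1" for z
  proof
    assume "1 - z * g z = 0"
    then have "z * g z = 1" by simp
    then show False using reh[OF that] by simp
  qed
  define \<phi> where "\<phi> = (\<lambda>z. - g z / (1 - z * g z))"
  have hphi: "\<phi> holomorphic_on ball 0 1" unfolding \<phi>_def using hg den by (intro holomorphic_intros) auto
  define \<omega> where "\<omega> = (\<lambda>z. z * \<phi> z)"
  have hom: "\<omega> holomorphic_on ball 0 1" unfolding \<omega>_def using hphi by (intro holomorphic_intros)
  have om0: "\<omega> 0 = 0" by (simp add: \<omega>_def)
  have omlt: "cmod (\<omega> z) < 1" if "cmod z < 1" for z
  proof -
    have "\<omega> z = - ((z * g z) / (1 - z * g z))" by (simp add: \<omega>_def \<phi>_def)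
    then show ?thesis using normlt[OF reh] that by simp
  qed
  note S = Schwarz_Lemma[where f=\<omega>, OF hom om0 omlt]
  have g0: "g 0 = A" using d1 by (simp add: g_def A)
  have phi0: "\<phi> 0 = - A" by (simp add: \<phi>_def g0)
  have "(\<phi> has_field_derivative deriv \<phi> 0) (at 0)"
    by (rule holomorphic_derivI[OF hphi open_ball]) simp
  then have "(\<omega> has_field_derivative (1 * \<phi> 0 + deriv \<phi> 0 * 0)) (at 0)"
    unfolding \<omega>_def by (intro DERIV_mult DERIV_ident)
  then have "deriv \<omega> 0 = \<phi> 0" by (simp add: DERIV_imp_deriv)
  then have A1: "cmod A \<le> 1" using S(2)[of 0] phi0 by simp
  have phile: "cmod (\<phi> z) \<le> 1" if "cmod z < 1" for z
  proof (cases "z = 0")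
    case True then show ?thesis using A1 phi0 by simp
  next
    case False
    have "cmod (\<omega> z) \<le> cmod z" using S(1)[of z] that by simp
    then have "cmod z * cmod (\<phi> z) \<le> cmod z * 1" by (simp add: \<omega>_def norm_mult)
    then show ?thesis using False by (simp add: mult_le_cancel_left)
  qed
  have dg: "(g has_field_derivative (B * f1 0 - f2 0 * A) / (f1 0 * f1 0)) (at 0)"
    unfolding g_def by (rule DERIV_divide[OF df2 df1]) (simp add: d1)
  then have dg': "(g has_field_derivative B - A*A) (at 0)" by (simp add: d1 A)
  have dnum: "((\<lambda>z. - g z) has_field_derivative -(B - A*A)) (at 0)"
    by (rule DERIV_minus[OF dg'])
  have dden: "((\<lambda>z. 1 - z * g z) has_field_derivative 0 - (1 * g 0 + (B - A*A) * 0)) (at 0)"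
    by (intro DERIV_diff DERIV_const DERIV_mult DERIV_ident dg')
  have "(\<phi> has_field_derivative (-(B - A*A) * (1 - 0 * g 0) - (- g 0) * (0 - (1 * g 0 + (B - A*A) * 0))) / ((1 - 0 * g 0) * (1 - 0 * g 0))) (at 0)"
    unfolding \<phi>_def by (rule DERIV_divide[OF dnum dden]) simp
  then have dphi: "(\<phi> has_field_derivative - B) (at 0)" by (simp add: g0)
  have "r * cmod B \<le> 1 - r^2 * (cmod A)^2" if r: "0 < r" "r < 1" for r :: real
  proof -
    define c where "c = of_real r * (- A)"
    have "cmod c = r * cmod A" using r by (simp add: c_def norm_mult)
    moreover have "r * cmod A \<le> r * 1" using A1 r by (intro mult_left_mono) auto
    ultimately have c1: "cmod c < 1" using r by linarith
    define \<psi> where "\<psi> = (\<lambda>z. (of_real r * \<phi> z - c) / (1 - cnj c * (of_real r * \<phi> z)))"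
    have rphi: "cmod (of_real r * \<phi> z) < 1" if "cmod z < 1" for z
    proof -
      have "cmod (of_real r * \<phi> z) = r * cmod (\<phi> z)" using r by (simp add: norm_mult)
      moreover have "r * cmod (\<phi> z) \<le> r * 1" using phile[OF that] r by (intro mult_left_mono) auto
      ultimately show ?thesis using r by linarith
    qed
    have psiM: "\<psi> z = Moebius_function 0 c (of_real r * \<phi> z)" for z
      by (simp add: \<psi>_def Moebius_function_simple)
    have dnz: "1 - cnj c * (of_real r * \<phi> z) \<noteq> 0" if "cmod z < 1" for z
    proof
      assume "1 - cnj c * (of_real r * \<phi> z) = 0"
      then have "cnj c * (of_real r * \<phi> z) = 1" by simp
      then have "cmod (cnj c * (of_real r * \<phi> z)) = 1" by simp
      moreover have "cmod (cnj c * (of_real r * \<phi> z)) < 1"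
      proof -
        have "cmod c * cmod (of_real r * \<phi> z) \<le> cmod c * 1"
          using rphi[OF that] by (intro mult_left_mono) auto
        then show ?thesis using c1 by (simp only: norm_mult complex_mod_cnj)
      qed
      ultimately show False by simp
    qed
    have hpsi: "\<psi> holomorphic_on ball 0 1" unfolding \<psi>_def using hphi dnz
      by (intro holomorphic_intros) auto
    have psi0: "\<psi> 0 = 0" by (simp add: \<psi>_def phi0 c_def)
    have psilt: "cmod (\<psi> z) < 1" if "cmod z < 1" for z
      unfolding psiM using Moebius_function_norm_lt_1[OF c1 rphi[OF that]] .
    have nA: "A * cnj A = of_real (cmod A) * of_real (cmod A)"
      using complex_norm_square[of A] by (simp add: power2_eq_square)
    have D0: "1 - cnj c * (of_real r * \<phi> 0) = of_real (1 - r^2 * (cmod A)^2)"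
      by (simp add: c_def phi0 nA power2_eq_square mult_ac)
    have "(\<psi> has_field_derivative ((of_real r * (-B) - 0) * (1 - cnj c * (of_real r * \<phi> 0)) - (of_real r * \<phi> 0 - c) * (0 - cnj c * (of_real r * (-B)))) / ((1 - cnj c * (of_real r * \<phi> 0)) * (1 - cnj c * (of_real r * \<phi> 0)))) (at 0)"
      unfolding \<psi>_def using dnz[of 0]
      by (intro DERIV_divide DERIV_diff DERIV_const DERIV_cmult dphi) auto
    moreover have "of_real r * \<phi> 0 - c = 0" by (simp add: c_def phi0)
    ultimately have "(\<psi> has_field_derivative (of_real r * (-B)) / (1 - cnj c * (of_real r * \<phi> 0))) (at 0)"
      using dnz[of 0] by simp
    then have "deriv \<psi> 0 = (of_real r * (-B)) / of_real (1 - r^2 * (cmod A)^2)"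
      using D0 by (simp add: DERIV_imp_deriv)
    moreover have "cmod (deriv \<psi> 0) \<le> 1" using Schwarz_Lemma(2)[where f=\<psi>, OF hpsi psi0 psilt, of 0] by simp
    moreover have pos: "0 < 1 - r^2 * (cmod A)^2"
    proof -
      have "r^2 * (cmod A)^2 \<le> r^2 * 1" using A1 by (intro mult_left_mono) (auto simp: power_le_one)
      moreover have "r^2 < 1" using r by (simp add: power_less_one_iff)
      ultimately show ?thesis by linarith
    qed
    ultimately have le: "cmod ((of_real r * (-B)) / of_real (1 - r^2 * (cmod A)^2)) \<le> 1" by simp
    have "cmod ((of_real r * (-B)) / of_real (1 - r^2 * (cmod A)^2)) = r * cmod B / (1 - r^2 * (cmod A)^2)"
      using r pos by (simp only: norm_divide norm_mult norm_minus_cancel norm_of_real abs_of_pos)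
    with le pos show ?thesis by (simp add: divide_le_eq)
  qed
  then have "cmod B \<le> 1 - (cmod A)^2" by (rule limr)
  with A1 show ?thesis by simp
qed

lemma alg: fixes a b X :: real
  assumes "0 \<le> a" "a \<le> 1" "0 \<le> b" "b \<le> 1 - a^2" "\<bar>X\<bar> \<le> a^2 * b"
  shows "1/2 \<le> X/12 - a^2/2 - b^2/36 + 1 \<and> X/12 - a^2/2 - b^2/36 + 1 \<le> 1"
proof -
  define t where "t = a^2"
  have t0: "0 \<le> t" "t \<le> 1" using assms by (auto simp: t_def power_le_one)
  have bb: "b^2 \<le> (1-t)^2" using assms by (intro power_mono) (auto simp: t_def)
  have tb: "t*b \<le> t*(1-t)" using assms t0 by (intro mult_left_mono) (auto simp: t_def)
  have "0 \<le> a^2" by simp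
  then have "b \<le> 1" using assms(4) by linarith
  then have tb1: "t*b \<le> t*1" using t0 by (intro mult_left_mono) auto
  have p: "0 \<le> (1-t)*(17-2*t)" using t0 by (intro mult_nonneg_nonneg) auto
  have X: "- (t*b) \<le> X" "X \<le> t*b" using assms(5) by (auto simp: t_def)
  have "0 \<le> b^2" by simp
  have i1: "(1-t)*(17-2*t) = 17 - 19*t + 2*(t*t)" by (simp add: algebra_simps)
  have i2: "(1-t)^2 = 1 - 2*t + t*t" by (simp add: power2_eq_square algebra_simps)
  have i3: "t*(1-t) = t - t*t" by (simp add: algebra_simps)
  have q1: "t*b \<le> t - t*t" using tb i3 by linarith
  have q2: "b^2 \<le> 1 - 2*t + t*t" using bb i2 by linarith
  have q3: "0 \<le> 17 - 19*t + 2*(t*t)" using p i1 by linarith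
  have q4: "t*b \<le> t" using tb1 by simp
  have "1/2 \<le> X/12 - t/2 - b^2/36 + 1" using X(1) q1 q2 q3 by linarith
  moreover have "X/12 - t/2 - b^2/36 + 1 \<le> 1" using X(2) q4 t0 \<open>0 \<le> b^2\<close> by linarith
  ultimately show ?thesis by (simp add: t_def)
qed

lemma d1: "deriv (\<lambda>z::complex. z) = (\<lambda>z. 1)" by (rule ext) (rule DERIV_imp_deriv, auto intro!: derivative_eq_intros)
lemma d0: "deriv (\<lambda>z::complex. c) = (\<lambda>z. 0)" by (rule ext) (rule DERIV_imp_deriv, auto intro!: derivative_eq_intros)
lemma e1: "deriv (\<lambda>z::complex. z - z^2/2) = (\<lambda>z. 1 - z)" by (rule ext) (rule DERIV_imp_deriv, auto intro!: derivative_eq_intros)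
lemma e2: "deriv (\<lambda>z::complex. 1 - z) = (\<lambda>z. -1)" by (rule ext) (rule DERIV_imp_deriv, auto intro!: derivative_eq_intros)
lemma tc2: "tcoeff f 2 = deriv (deriv f) 0 / 2" by (simp add: tcoeff_def numeral_2_eq_2)
lemma tc3: "tcoeff f 3 = deriv (deriv (deriv f)) 0 / 6" by (simp add: tcoeff_def numeral_3_eq_3 fact_Suc)

lemma reh: fixes z :: complex assumes "cmod z < 1" shows "Re (1 + z * (-1) / (1 - z)) < 1 + 1/2"
proof -
  define x where "x = Re z"
  define y where "y = Im z"
  have "sqrt (x^2 + y^2) < 1" using assms by (simp add: x_def y_def cmod_def)
  then have xy: "x^2 + y^2 < 1" by simp
  define d where "d = (1-x)^2 + y^2"
  have "x < 1" using xy by (smt (verit) zero_le_power2 one_le_power abs_le_square_iff power2_abs)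
  have dp: "0 < d" unfolding d_def using \<open>x < 1\<close> by (smt (verit) zero_le_power2 zero_less_power2)
  have "Re (z / (1 - z)) = (Re z * Re (1-z) + Im z * Im (1-z)) / ((Re (1-z))^2 + (Im (1-z))^2)"
    by (rule Re_divide)
  also have "\<dots> = (x*(1-x) - y^2) / d" by (simp add: x_def y_def d_def power2_eq_square)
  finally have R: "Re (z / (1 - z)) = (x*(1-x) - y^2) / d" .
  have "-1/2 * d < x*(1-x) - y^2" using xy unfolding d_def by (simp add: power2_eq_square algebra_simps)
  then have "-1/2 < (x*(1-x) - y^2) / d" using dp by (simp add: less_divide_eq)
  moreover have "Re (1 + z * (-1) / (1 - z)) = 1 - Re (z / (1 - z))" by simp
  ultimately show ?thesis using R by linarith
qed

theorem theorem4:
  shows "(\<forall>f. classG 1 f \<longrightarrow> 1/2 \<le> detT31 f \<and> detT31 f \<le> 1)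
         \<and> (\<exists>f. classG 1 f \<and> detT31 f = 1/2)
         \<and> (\<exists>f. classG 1 f \<and> detT31 f = 1)"
proof (intro conjI)
  show "\<forall>f. classG 1 f \<longrightarrow> 1/2 \<le> detT31 f \<and> detT31 f \<le> 1"
  proof (intro allI impI)
    fix f assume G: "classG 1 f"
    define A where "A = deriv (deriv f) 0"
    define B where "B = deriv (deriv (deriv f)) 0"
    have K: "cmod A \<le> 1 \<and> cmod B \<le> 1 - (cmod A)^2" using key[OF G] by (simp add: A_def B_def)
    have e: "(A/2)^2 * cnj (B/6) = (A^2 * cnj B) / 24" by (simp add: power2_eq_square)
    have det: "detT31 f = Re (A^2 * cnj B)/12 - (cmod A)^2/2 - (cmod B)^2/36 + 1"
      unfolding detT31_def tc2 tc3 A_def[symmetric] B_def[symmetric] e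
      by (simp add: norm_divide power2_eq_square)
    have X: "\<bar>Re (A^2 * cnj B)\<bar> \<le> (cmod A)^2 * cmod B"
      using abs_Re_le_cmod[of "A^2 * cnj B"] by (simp add: norm_mult norm_power)
    show "1/2 \<le> detT31 f \<and> detT31 f \<le> 1"
      unfolding det using alg[OF _ _ _ _ X] K by simp
  qed
next
  let ?f = "\<lambda>z::complex. z - z^2/2"
  have G: "classG 1 ?f"
    unfolding classG_def classA_def e1 e2
  proof (intro conjI ballI)
    show "?f holomorphic_on ball 0 1" by (intro holomorphic_intros) auto
  next
    fix z :: complex assume z: "z \<in> ball 0 1"
    then show "1 - z \<noteq> 0" by auto
    show "Re (1 + z * - 1 / (1 - z)) < 1 + 1 / 2" using z reh by simp
  qed simp_all
  have "detT31 ?f = 1/2"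
    unfolding detT31_def tc2 tc3 e1 e2 d0 by (simp add: power2_eq_square)
  with G show "\<exists>f. classG 1 f \<and> detT31 f = 1/2" by blast
next
  have G: "classG 1 (\<lambda>z. z)"
    unfolding classG_def classA_def d1 d0 by auto
  have "detT31 (\<lambda>z. z) = 1"
    unfolding detT31_def tc2 tc3 d1 d0 by simp
  with G show "\<exists>f. classG 1 f \<and> detT31 f = 1" by blast
qed

end
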